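(* Let $n_0,L\in\mathbb{N}_+$, $n_1,\dots,n_L\in\mathbb{N}_+$, $h_l\in\mathrm{RL}(n_{l-1},n_l)$ for $l=1,\dots,L$, $\mathbf{h}=(h_1,\dots,h_L)$, and $\gamma\in\Gamma$. Then for every $l\in\{2,\dots,L\}$, $$\tilde{\mathcal{H}}^{(l)}(\mathcal{S}^{(l)}_{\mathbf{h}})\preceq\varphi^{(\gamma)}_{n_l}\big(\tilde{\mathcal{H}}^{(l-1)}(\mathcal{S}^{(l-1)}_{\mathbf{h}})\big).$$
   Context: $\sigma(x)=\max(0,x)$; $\mathrm{RL}(n,n')$ ($n,n'\in\mathbb{N}_+$) is the set of maps $h:\mathbb{R}^n\to\mathbb{R}^{n'}$, $h(x)_i=\sigma(\langle x,w_i\rangle+b_i)$ for some $W\in\mathbb{R}^{n'\times n}$ with rows $w_i$, $b\in\mathbb{R}^{n'}$; convention: $\mathrm{RL}(0,n')$ are constant maps $\{0\}\to\mathbb{R}^{n'}$ with $\mathcal{H}_{n'}(\mathcal{S}_h)={\rm e}_0$. Signature $S_h(x)_i=1$ iff $\langle x,w_i\rangle+b_i>0$ else $0$; $\mathcal{S}_h=\{S_h(x)\}$; $|s|=\sum_i s_i$. Multi signature $S_{\mathbf{h}}(x)=(S_{h_1}(x),S_{h_2}(h_1(x)),\dots,S_{h_L}(h_{L-1}\circ\cdots\circ h_1(x)))$, $\mathcal{S}_{\mathbf{h}}=\{S_{\mathbf{h}}(x):x\in\mathbb{R}^{n_0}\}$, and $\mathcal{S}^{(l)}_{\mathbf{h}}=\{(s_1,\dots,s_l):(s_1,\dots,s_L)\in\mathcal{S}_{\mathbf{h}}\}$.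 $V$: sequences $(v_j)_{j\in\mathbb{N}}$ of nonnegative integers with finite sum; ${\rm e}_i$ has $({\rm e}_i)_j=\delta_{ij}$; $v\preceq w$ iff $\sum_{j\ge J}v_j\le\sum_{j\ge J}w_j$ for all $J$; $\max_i(v^{(i)})_J=\max_i\sum_{j\ge J}v^{(i)}_j-\max_i\sum_{j\ge J+1}v^{(i)}_j$ for finite families. $\mathcal{H}_{n'}(\mathcal{S})=(|\{s\in\mathcal{S}:|s|=j\}|)_j$. $\tilde{\mathcal{H}}^{(l)}(U)=(|\{(s_1,\dots,s_l)\in U:\min(n_0,|s_1|,\dots,|s_l|)=j\}|)_{j\in\mathbb{N}}$ for $U\subseteq\{0,1\}^{n_1}\times\dots\times\{0,1\}^{n_l}$. $\Gamma$: families $(\gamma_{n,n'})_{n'\in\mathbb{N}_+,n\in\{0,\dots,n'\}}$ in $V$ with (i) $\max\{\mathcal{H}_{n'}(\mathcal{S}_h):h\in\mathrm{RL}(n,n')\}\preceq\gamma_{n,n'}$, (ii) $n\le\tilde n\le n'\Rightarrow\gamma_{n,n'}\preceq\gamma_{\tilde n,n'}$. $\mathrm{cl}_{i^*}(v)_i=v_i$ ($i<i^*$), $\sum_{j\ge i^*}v_j$ ($i=i^*$), $0$ ($i>i^*$). $\varphi^{(\gamma)}_{n'}(v)=\sum_{n=0}^\infty v_n\,\mathrm{cl}_{\min(n,n')}(\gamma_{\min(n,n'),n'})$. *)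

theory Defs
  imports Complex_Main
begin

(* Elements of V: nat \<Rightarrow> nat with finite support *)
definition finsupp :: "(nat \<Rightarrow> nat) \<Rightarrow> bool" where
  "finsupp v \<longleftrightarrow> finite {j. v j \<noteq> 0}"

definition tail :: "(nat \<Rightarrow> nat) \<Rightarrow> nat \<Rightarrow> nat" where
  "tail v J = (\<Sum>j | J \<le> j \<and> v j \<noteq> 0. v j)"

definition precV :: "(nat \<Rightarrow> nat) \<Rightarrow> (nat \<Rightarrow> nat) \<Rightarrow> bool" where
  "precV v w \<longleftrightarrow> (\<forall>J. tail v J \<le> tail w J)"

definition unitV :: "nat \<Rightarrow> nat \<Rightarrow> nat" where
  "unitV i = (\<lambda>j. if j = i then 1 else 0)"

(* max of a finite family of elements of V *)
definition maxV :: "(nat \<Rightarrow> nat) set \<Rightarrow> nat \<Rightarrow> nat" where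
  "maxV F = (\<lambda>J. Max ((\<lambda>v. tail v J) ` F) - Max ((\<lambda>v. tail v (Suc J)) ` F))"

(* vectors in R^n are functions nat \<Rightarrow> real vanishing from index n on;
   a ReLU layer in RL(n,n') is given by weights Wl i j (i<n', j<n) and biases bl i *)
definition preact :: "(nat \<Rightarrow> nat \<Rightarrow> real) \<Rightarrow> (nat \<Rightarrow> real) \<Rightarrow> nat \<Rightarrow> (nat \<Rightarrow> real) \<Rightarrow> nat \<Rightarrow> real" where
  "preact Wl bl n x i = (\<Sum>j<n. Wl i j * x j) + bl i"

definition layer :: "(nat \<Rightarrow> nat \<Rightarrow> real) \<Rightarrow> (nat \<Rightarrow> real) \<Rightarrow> nat \<Rightarrow> nat \<Rightarrow> (nat \<Rightarrow> real) \<Rightarrow> nat \<Rightarrow> real" where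
  "layer Wl bl n n' x = (\<lambda>i. if i < n' then max 0 (preact Wl bl n x i) else 0)"

(* signature, as the set of indices i<n' with entry 1; |s| = card s *)
definition sigl :: "(nat \<Rightarrow> nat \<Rightarrow> real) \<Rightarrow> (nat \<Rightarrow> real) \<Rightarrow> nat \<Rightarrow> nat \<Rightarrow> (nat \<Rightarrow> real) \<Rightarrow> nat set" where
  "sigl Wl bl n n' x = {i. i < n' \<and> preact Wl bl n x i > 0}"

definition sigset :: "nat \<Rightarrow> nat \<Rightarrow> (nat \<Rightarrow> nat \<Rightarrow> real) \<Rightarrow> (nat \<Rightarrow> real) \<Rightarrow> nat set set" where
  "sigset n n' Wl bl = {sigl Wl bl n n' x | x. \<forall>j\<ge>n. x j = 0}"

definition Hcount :: "nat \<Rightarrow> nat set set \<Rightarrow> nat \<Rightarrow> nat" where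
  "Hcount n' S = (\<lambda>j. card {s \<in> S. card s = j})"

(* { H_{n'}(S_h) : h \<in> RL(n,n') }, with the convention for n = 0 *)
definition HRL :: "nat \<Rightarrow> nat \<Rightarrow> (nat \<Rightarrow> nat) set" where
  "HRL n n' = (if n = 0 then {unitV 0}
               else {Hcount n' (sigset n n' Wl bl) | Wl bl. True})"

(* the class \<Gamma>;  \<gamma> n n' = \<gamma>_{n,n'} *)
definition Gamma :: "(nat \<Rightarrow> nat \<Rightarrow> nat \<Rightarrow> nat) \<Rightarrow> bool" where
  "Gamma \<gamma> \<longleftrightarrow>
     (\<forall>n' n. 1 \<le> n' \<and> n \<le> n' \<longrightarrow> finsupp (\<gamma> n n') \<and> precV (maxV (HRL n n')) (\<gamma> n n')) \<and>
     (\<forall>n m n'. 1 \<le> n' \<and> n \<le> m \<and> m \<le> n' \<longrightarrow> precV (\<gamma> n n') (\<gamma> m n'))"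

definition cl :: "nat \<Rightarrow> (nat \<Rightarrow> nat) \<Rightarrow> nat \<Rightarrow> nat" where
  "cl i v = (\<lambda>k. if k < i then v k else if k = i then tail v i else 0)"

definition phi :: "(nat \<Rightarrow> nat \<Rightarrow> nat \<Rightarrow> nat) \<Rightarrow> nat \<Rightarrow> (nat \<Rightarrow> nat) \<Rightarrow> nat \<Rightarrow> nat" where
  "phi \<gamma> n' v = (\<lambda>k. \<Sum>n | v n \<noteq> 0. v n * cl (min n n') (\<gamma> (min n n') n') k)"

(* network: widths d 0, ..., d L; layer l has weights W l and biases B l *)
primrec netout :: "(nat \<Rightarrow> nat) \<Rightarrow> (nat \<Rightarrow> nat \<Rightarrow> nat \<Rightarrow> real) \<Rightarrow> (nat \<Rightarrow> nat \<Rightarrow> real) \<Rightarrow> nat \<Rightarrow> (nat \<Rightarrow> real) \<Rightarrow> nat \<Rightarrow> real" where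
  "netout d W B 0 x = x"
| "netout d W B (Suc l) x = layer (W (Suc l)) (B (Suc l)) (d l) (d (Suc l)) (netout d W B l x)"

(* (s_1,...,s_l), the first l components of the multi signature, as a list *)
definition msig :: "(nat \<Rightarrow> nat) \<Rightarrow> (nat \<Rightarrow> nat \<Rightarrow> nat \<Rightarrow> real) \<Rightarrow> (nat \<Rightarrow> nat \<Rightarrow> real) \<Rightarrow> nat \<Rightarrow> (nat \<Rightarrow> real) \<Rightarrow> nat set list" where
  "msig d W B l x = map (\<lambda>k. sigl (W k) (B k) (d (k - 1)) (d k) (netout d W B (k - 1) x)) [1..<Suc l]"

definition Sl :: "(nat \<Rightarrow> nat) \<Rightarrow> (nat \<Rightarrow> nat \<Rightarrow> nat \<Rightarrow> real) \<Rightarrow> (nat \<Rightarrow> nat \<Rightarrow> real) \<Rightarrow> nat \<Rightarrow> nat set list set" where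
  "Sl d W B l = {msig d W B l x | x. \<forall>j\<ge>d 0. x j = 0}"

definition Htil :: "nat \<Rightarrow> nat set list set \<Rightarrow> nat \<Rightarrow> nat" where
  "Htil n0 U = (\<lambda>j. card {t \<in> U. Min (insert n0 (card ` set t)) = j})"

end

theory Submission
  imports Defs
begin

lemma tail_eq_sum:
  assumes "\<forall>j\<ge>N. v j = 0" shows "tail v J = sum v {J..<N}"
proof -
  have "tail v J = sum v {j. J \<le> j \<and> v j \<noteq> 0}" by (simp add: tail_def)
  also have "\<dots> = sum v {J..<N}"
    apply (rule sum.mono_neutral_left)
    using assms by (auto simp: not_less[symmetric])
  finally show ?thesis .
qed

lemma tail_zero:
  assumes "\<forall>j\<ge>N. v j = 0" "N \<le> J" shows "tail v J = 0"
  using tail_eq_sum[OF assms(1)] assms(2) by simp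

lemma tail_Suc:
  assumes "\<forall>j\<ge>N. v j = 0" shows "tail v J = v J + tail v (Suc J)"
proof -
  have h: "\<forall>j\<ge>max N (Suc J). v j = 0" using assms by auto
  show ?thesis unfolding tail_eq_sum[OF h]
    by (simp add: sum.atLeast_Suc_lessThan)
qed

lemma tail_mono:
  assumes "\<forall>j\<ge>N. v j = 0" shows "tail v (Suc J) \<le> tail v J"
  using tail_Suc[OF assms, of J] by simp

lemma tail_split:
  assumes "\<forall>j\<ge>N. v j = 0" "J \<le> i" shows "tail v J = sum v {J..<i} + tail v i"
  using assms(2)
proof (induction i)
  case 0 then show ?case by simp
next
  case (Suc i)
  show ?case
  proof (cases "J = Suc i")
    case True then show ?thesis by simp
  next
    case False
    then have "J \<le> i" using Suc by simp
    then show ?thesis using Suc.IH tail_Suc[OF assms(1), of i] by (simp add: sum.atLeastLessThan_Suc)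
  qed
qed

lemma maxV_ge:
  assumes "v \<in> F" "\<forall>w\<in>F. \<forall>j\<ge>N. w j = 0" "\<forall>w\<in>F. \<forall>j. tail w j \<le> K"
  shows "tail v J \<le> tail (maxV F) J"
proof -
  define M where "M j = Max ((\<lambda>w. tail w j) ` F)" for j
  have fin: "finite ((\<lambda>w. tail w j) ` F)" for j
    by (rule finite_subset[of _ "{..K}"]) (use assms(3) in auto)
  have ne: "(\<lambda>w. tail w j) ` F \<noteq> {}" for j using assms(1) by auto
  have ge: "tail w j \<le> M j" if "w \<in> F" for w j
    unfolding M_def using fin ne that by (intro Max_ge) auto
  have Mmono: "M (Suc j) \<le> M j" for j
  proof -
    have "M (Suc j) \<in> (\<lambda>w. tail w (Suc j)) ` F" unfolding M_def using fin ne by (rule Max_in)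
    then obtain w where w: "w \<in> F" "M (Suc j) = tail w (Suc j)" by auto
    then show ?thesis using tail_mono[of N w j] assms(2) ge[of w j] by auto
  qed
  have Mz: "M j = 0" if "N \<le> j" for j
  proof -
    have "M j \<in> (\<lambda>w. tail w j) ` F" unfolding M_def using fin ne by (rule Max_in)
    then obtain w where w: "w \<in> F" "M j = tail w j" by auto
    then show ?thesis using tail_zero[of N w j] assms(2) that by auto
  qed
  have mv: "maxV F j = M j - M (Suc j)" for j unfolding maxV_def M_def by simp
  have mvz: "\<forall>j\<ge>N. maxV F j = 0" using mv Mz by simp
  have key: "\<forall>J. N - J \<le> i \<longrightarrow> tail (maxV F) J = M J" for i
  proof (induction i)
    case 0 then show ?case using tail_zero[OF mvz] Mz by simp
  next
    case (Suc i)
    show ?case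
    proof (intro allI impI)
      fix J assume a: "N - J \<le> Suc i"
      show "tail (maxV F) J = M J"
      proof (cases "N \<le> J")
        case True then show ?thesis using tail_zero[OF mvz] Mz by simp
      next
        case False
        then have "N - Suc J \<le> i" using a by simp
        then have "tail (maxV F) (Suc J) = M (Suc J)" using Suc.IH by blast
        then show ?thesis using tail_Suc[OF mvz, of J] mv[of J] Mmono[of J] by simp
      qed
    qed
  qed
  show ?thesis using key[of N] ge[OF assms(1)] by simp
qed


lemma tail_fiber:
  assumes "finite U" "\<forall>t\<in>U. g t \<le> N"
  shows "tail (\<lambda>j. card {t\<in>U. g t = j}) J = card {t\<in>U. J \<le> g t}"
proof -
  have z: "\<forall>j\<ge>Suc N. card {t\<in>U. g t = j} = 0" using assms by fastforce
  have "tail (\<lambda>j. card {t\<in>U. g t = j}) J = (\<Sum>j\<in>{J..<Suc N}. card {t\<in>U. g t = j})"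
    by (rule tail_eq_sum[OF z])
  also have "\<dots> = card (\<Union>j\<in>{J..<Suc N}. {t\<in>U. g t = j})"
    by (rule card_UN_disjoint[symmetric]) (use assms in auto)
  also have "(\<Union>j\<in>{J..<Suc N}. {t\<in>U. g t = j}) = {t\<in>U. J \<le> g t}"
    using assms(2) by (auto simp: less_Suc_eq_le)
  finally show ?thesis .
qed

lemma cl_zero: "i < k \<Longrightarrow> cl i g k = 0" by (simp add: cl_def)

lemma tail_cl:
  assumes "\<forall>j\<ge>N. g j = 0"
  shows "tail (cl i g) J = (if J \<le> i then tail g J else 0)"
proof -
  have z: "\<forall>j\<ge>Suc i. cl i g j = 0" by (simp add: cl_def)
  show ?thesis
  proof (cases "J \<le> i")
    case True
    have "tail (cl i g) J = sum (cl i g) {J..<Suc i}" by (rule tail_eq_sum[OF z])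
    also have "\<dots> = sum (cl i g) {J..<i} + cl i g i" using True by simp
    also have "sum (cl i g) {J..<i} = sum g {J..<i}" by (rule sum.cong) (auto simp: cl_def)
    also have "cl i g i = tail g i" by (simp add: cl_def)
    finally show ?thesis using tail_split[OF assms True] True by simp
  next
    case False then show ?thesis using tail_zero[OF z] by simp
  qed
qed

lemma phi_eq:
  assumes "finite U"
  shows "phi \<gamma> n' (\<lambda>j. card {t\<in>U. g t = j}) k
     = (\<Sum>t\<in>U. cl (min (g t) n') (\<gamma> (min (g t) n') n') k)"
proof -
  define c where "c y = cl (min y n') (\<gamma> (min y n') n') k" for y
  have e: "{n. card {t\<in>U. g t = n} \<noteq> 0} = g ` U" using assms by auto
  have "(\<Sum>t\<in>U. c (g t)) = (\<Sum>y\<in>g ` U. \<Sum>t\<in>{x\<in>U. g x = y}. c (g t))"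
    by (rule sum.image_gen[OF assms])
  also have "\<dots> = (\<Sum>y\<in>g ` U. card {t\<in>U. g t = y} * c y)"
    by (rule sum.cong) auto
  finally show ?thesis unfolding phi_def e c_def by simp
qed

lemma tail_phi:
  assumes "finite U" "\<forall>i\<le>n'. \<exists>N. \<forall>j\<ge>N. \<gamma> i n' j = 0"
  shows "tail (phi \<gamma> n' (\<lambda>j. card {t\<in>U. g t = j})) J
     = (\<Sum>t\<in>U. if J \<le> min (g t) n' then tail (\<gamma> (min (g t) n') n') J else 0)"
proof -
  have z: "\<forall>k\<ge>Suc n'. phi \<gamma> n' (\<lambda>j. card {t\<in>U. g t = j}) k = 0"
    unfolding phi_eq[OF assms(1)] by (auto simp: cl_def intro!: sum.neutral)
  have "tail (phi \<gamma> n' (\<lambda>j. card {t\<in>U. g t = j})) J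
      = (\<Sum>k\<in>{J..<Suc n'}. \<Sum>t\<in>U. cl (min (g t) n') (\<gamma> (min (g t) n') n') k)"
    unfolding tail_eq_sum[OF z] phi_eq[OF assms(1)] ..
  also have "\<dots> = (\<Sum>t\<in>U. \<Sum>k\<in>{J..<Suc n'}. cl (min (g t) n') (\<gamma> (min (g t) n') n') k)"
    by (rule sum.swap)
  also have "\<dots> = (\<Sum>t\<in>U. tail (cl (min (g t) n') (\<gamma> (min (g t) n') n')) J)"
  proof (rule sum.cong[OF refl])
    fix t
    have z2: "\<forall>k\<ge>Suc n'. cl (min (g t) n') (\<gamma> (min (g t) n') n') k = 0" by (auto simp: cl_def)
    show "(\<Sum>k\<in>{J..<Suc n'}. cl (min (g t) n') (\<gamma> (min (g t) n') n') k) = tail (cl (min (g t) n') (\<gamma> (min (g t) n') n')) J"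
      unfolding tail_eq_sum[OF z2] ..
  qed
  also have "\<dots> = (\<Sum>t\<in>U. if J \<le> min (g t) n' then tail (\<gamma> (min (g t) n') n') J else 0)"
  proof (rule sum.cong[OF refl])
    fix t
    obtain N where "\<forall>j\<ge>N. \<gamma> (min (g t) n') n' j = 0" using assms(2) min.cobounded2 by blast
    then show "tail (cl (min (g t) n') (\<gamma> (min (g t) n') n')) J = (if J \<le> min (g t) n' then tail (\<gamma> (min (g t) n') n') J else 0)"
      by (rule tail_cl)
  qed
  finally show ?thesis .
qed

lemma finsupp_bound: "finsupp v \<Longrightarrow> \<exists>N. \<forall>j\<ge>N. v j = 0"
proof -
  assume "finsupp v"
  then have f: "finite {j. v j \<noteq> 0}" by (simp add: finsupp_def)
  show ?thesis
  proof (intro exI allI impI)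
    fix j assume "Suc (Max (insert 0 {j. v j \<noteq> 0})) \<le> j"
    then show "v j = 0" using f Max_ge[of "insert 0 {j. v j \<noteq> 0}" j] by fastforce
  qed
qed


lemma affine_comp:
  fixes Wr :: "nat \<Rightarrow> real"
  shows "(\<Sum>q<n. Wr q * ((\<Sum>p\<in>I. C q p * y p) + e q)) + b
       = (\<Sum>p\<in>I. (\<Sum>q<n. Wr q * C q p) * y p) + ((\<Sum>q<n. Wr q * e q) + b)"
proof -
  have "(\<Sum>q<n. Wr q * ((\<Sum>p\<in>I. C q p * y p) + e q))
      = (\<Sum>q<n. \<Sum>p\<in>I. Wr q * C q p * y p) + (\<Sum>q<n. Wr q * e q)"
    by (simp add: distrib_left sum.distrib sum_distrib_left mult.assoc)
  also have "(\<Sum>q<n. \<Sum>p\<in>I. Wr q * C q p * y p) = (\<Sum>p\<in>I. (\<Sum>q<n. Wr q * C q p) * y p)"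
    by (subst sum.swap) (simp add: sum_distrib_right)
  finally show ?thesis by simp
qed

lemma msig_Suc:
  "msig d W B (Suc m) x = msig d W B m x @ [sigl (W (Suc m)) (B (Suc m)) (d m) (d (Suc m)) (netout d W B m x)]"
  unfolding msig_def by simp

lemma msig_length: "length (msig d W B m x) = m"
  unfolding msig_def by simp

lemma msig_nth:
  assumes "1 \<le> k" "k \<le> m"
  shows "msig d W B m x ! (k - 1) = sigl (W k) (B k) (d (k - 1)) (d k) (netout d W B (k - 1) x)"
proof -
  have "[1..<Suc m] ! (k - 1) = k" using assms by (subst nth_upt) auto
  then show ?thesis using assms unfolding msig_def by (simp del: upt_Suc add: nth_map)
qed

lemma delta_sum:
  assumes "finite A"
  shows "(\<Sum>p\<in>A. (if j = p then 1 else 0) * (y p::real)) = (if j \<in> A then y j else 0)"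
proof -
  have "(\<Sum>p\<in>A. (if j = p then 1 else 0) * (y p::real)) = (\<Sum>p\<in>A. if j = p then y p else 0)"
    by (rule sum.cong) auto
  also have "\<dots> = (if j \<in> A then y j else 0)" using assms by (simp add: sum.delta)
  finally show ?thesis .
qed

lemma netout_Suc_sig:
  "netout d W B (Suc i) x j =
    (if j \<in> sigl (W (Suc i)) (B (Suc i)) (d i) (d (Suc i)) (netout d W B i x)
     then preact (W (Suc i)) (B (Suc i)) (d i) (netout d W B i x) j else 0)"
  by (auto simp: layer_def sigl_def)

lemma sigl_sub: "sigl Wl bl n n' x \<subseteq> {..<n'}"
  by (auto simp: sigl_def)

definition nrep :: "(nat \<Rightarrow> nat) \<Rightarrow> (nat \<Rightarrow> nat \<Rightarrow> nat \<Rightarrow> real) \<Rightarrow> (nat \<Rightarrow> nat \<Rightarrow> real) \<Rightarrow> (nat \<Rightarrow> real) set \<Rightarrow> nat \<Rightarrow> nat \<Rightarrow> bool" where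
  "nrep d W B R i \<mu> \<longleftrightarrow> (\<exists>(I::nat set) C e. finite I \<and> card I \<le> \<mu> \<and>
      (\<forall>x\<in>R. \<exists>y. \<forall>j. netout d W B i x j = (\<Sum>p\<in>I. C j p * y p) + e j))"

lemma rep_induct:
  assumes hR: "\<forall>x\<in>R. (\<forall>j\<ge>d 0. x j = 0) \<and> msig d W B m x = t" and ne: "x0 \<in> R"
  shows "i \<le> m \<Longrightarrow> \<mu> \<in> insert (d 0) ((\<lambda>k. card (t ! (k - 1))) ` {1..i}) \<Longrightarrow> nrep d W B R i \<mu>"
proof (induction i arbitrary: \<mu>)
  case 0
  then have mu: "\<mu> = d 0" by simp
  show ?case unfolding nrep_def
  proof (rule exI[of _ "{..<d 0}"], rule exI[of _ "\<lambda>j p. if j = p then 1 else 0"], rule exI[of _ "\<lambda>j. 0"], intro conjI ballI)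
    show "finite {..<d 0}" by simp
    show "card {..<d 0} \<le> \<mu>" using mu by simp
    fix x assume x: "x \<in> R"
    show "\<exists>y. \<forall>j. netout d W B 0 x j = (\<Sum>p\<in>{..<d 0}. (if j = p then 1 else 0) * y p) + 0"
    proof (intro exI allI)
      fix j
      show "netout d W B 0 x j = (\<Sum>p\<in>{..<d 0}. (if j = p then 1 else 0) * x p) + 0"
        using hR x by (simp add: delta_sum)
    qed
  qed
next
  case (Suc i)
  define s where "s = t ! i"
  have sx: "sigl (W (Suc i)) (B (Suc i)) (d i) (d (Suc i)) (netout d W B i x) = s" if "x \<in> R" for x
    using msig_nth[of "Suc i" m d W B x] Suc.prems hR that by (simp add: s_def)
  have nx: "netout d W B (Suc i) x j = (if j \<in> s then preact (W (Suc i)) (B (Suc i)) (d i) (netout d W B i x) j else 0)"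
    if "x \<in> R" for x j
    using netout_Suc_sig[of d W B i x j] sx[OF that] by simp
  have fs: "finite s" 
    using sigl_sub[of "W (Suc i)" "B (Suc i)" "d i" "d (Suc i)"] Suc.prems hR
    using sx[OF ne] by (metis finite_lessThan finite_subset)
  show ?case
  proof (cases "\<mu> = card s")
    case True
    show ?thesis unfolding nrep_def
    proof (rule exI[of _ s], rule exI[of _ "\<lambda>j p. if j = p then 1 else 0"], rule exI[of _ "\<lambda>j. 0"], intro conjI ballI)
      show "finite s" by fact
      show "card s \<le> \<mu>" using True by simp
      fix x assume x: "x \<in> R"
      show "\<exists>y. \<forall>j. netout d W B (Suc i) x j = (\<Sum>p\<in>s. (if j = p then 1 else 0) * y p) + 0"
      proof (intro exI allI)
        fix j
        show "netout d W B (Suc i) x j = (\<Sum>p\<in>s. (if j = p then 1 else 0) * netout d W B (Suc i) x p) + 0"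
          using nx[OF x, of j] fs by (simp add: delta_sum)
      qed
    qed
  next
    case False
    then have "\<mu> \<in> insert (d 0) ((\<lambda>k. card (t ! (k - 1))) ` {1..i})"
      using Suc.prems by (auto simp: s_def le_Suc_eq)
    then have "nrep d W B R i \<mu>" using Suc.IH Suc.prems by simp
    then obtain I :: "nat set" and C e where IC: "finite I" "card I \<le> \<mu>"
      "\<forall>x\<in>R. \<exists>y. \<forall>j. netout d W B i x j = (\<Sum>p\<in>I. C j p * y p) + e j"
      unfolding nrep_def by blast
    show ?thesis unfolding nrep_def
    proof (rule exI[of _ I], rule exI[of _ "\<lambda>j p. if j \<in> s then (\<Sum>q<d i. W (Suc i) j q * C q p) else 0"],
      rule exI[of _ "\<lambda>j. if j \<in> s then (\<Sum>q<d i. W (Suc i) j q * e q) + B (Suc i) j else 0"], intro conjI ballI)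
      show "finite I" "card I \<le> \<mu>" by fact+
      fix x assume x: "x \<in> R"
      obtain y where y: "\<forall>j. netout d W B i x j = (\<Sum>p\<in>I. C j p * y p) + e j" using IC(3) x by blast
      show "\<exists>y. \<forall>j. netout d W B (Suc i) x j =
         (\<Sum>p\<in>I. (if j \<in> s then (\<Sum>q<d i. W (Suc i) j q * C q p) else 0) * y p)
         + (if j \<in> s then (\<Sum>q<d i. W (Suc i) j q * e q) + B (Suc i) j else 0)"
      proof (intro exI allI)
        fix j
        show "netout d W B (Suc i) x j =
         (\<Sum>p\<in>I. (if j \<in> s then (\<Sum>q<d i. W (Suc i) j q * C q p) else 0) * y p)
         + (if j \<in> s then (\<Sum>q<d i. W (Suc i) j q * e q) + B (Suc i) j else 0)"
        proof -
          have "preact (W (Suc i)) (B (Suc i)) (d i) (netout d W B i x) j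
             = (\<Sum>q<d i. W (Suc i) j q * ((\<Sum>p\<in>I. C q p * y p) + e q)) + B (Suc i) j"
            unfolding preact_def using y by simp
          also have "\<dots> = (\<Sum>p\<in>I. (\<Sum>q<d i. W (Suc i) j q * C q p) * y p) + ((\<Sum>q<d i. W (Suc i) j q * e q) + B (Suc i) j)"
            by (rule affine_comp)
          finally show ?thesis using nx[OF x, of j] by simp
        qed
      qed
    qed
  qed
qed


lemma reparam:
  assumes fin: "finite (I::nat set)" and cI: "card I \<le> k"
    and rp: "\<forall>x\<in>R. \<exists>y. \<forall>i<n'. P x i = (\<Sum>p\<in>I. C i p * y p) + e i"
  shows "\<exists>W' b'. \<forall>x\<in>R. \<exists>y'. (\<forall>j\<ge>k. y' j = 0) \<and> (\<forall>i<n'. P x i = preact W' b' k y' i)"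
proof -
  obtain h where h: "bij_betw h {0..<card I} I" using ex_bij_betw_nat_finite[OF fin] by blast
  show ?thesis
  proof (rule exI[of _ "\<lambda>i p. C i (h p)"], rule exI[of _ e], rule ballI)
    fix x assume x: "x \<in> R"
    obtain y where y: "\<forall>i<n'. P x i = (\<Sum>p\<in>I. C i p * y p) + e i" using rp x by blast
    define y' where "y' p = (if p < card I then y (h p) else 0)" for p
    show "\<exists>y'. (\<forall>j\<ge>k. y' j = 0) \<and> (\<forall>i<n'. P x i = preact (\<lambda>i p. C i (h p)) e k y' i)"
    proof (intro exI conjI allI impI)
      fix j assume "k \<le> j" then show "y' j = 0" using cI by (simp add: y'_def)
    next
      fix i assume i: "i < n'"
      have "(\<Sum>p<k. C i (h p) * y' p) = (\<Sum>p\<in>{0..<card I}. C i (h p) * y' p)"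
        by (rule sum.mono_neutral_right) (use cI in \<open>auto simp: y'_def\<close>)
      also have "\<dots> = (\<Sum>p\<in>{0..<card I}. C i (h p) * y (h p))"
        by (rule sum.cong) (auto simp: y'_def)
      also have "\<dots> = (\<Sum>p\<in>I. C i p * y p)"
        by (rule sum.reindex_bij_betw[OF h])
      finally show "P x i = preact (\<lambda>i p. C i (h p)) e k y' i"
        using y i by (simp add: preact_def)
    qed
  qed
qed

lemma sigl_cong:
  assumes "\<forall>i<n'. preact Wl bl n x i = preact Wl' bl' n2 x' i"
  shows "sigl Wl bl n n' x = sigl Wl' bl' n2 n' x'"
  using assms by (auto simp: sigl_def)

lemma set_msig_card:
  assumes "length t = m"
  shows "card ` set t = (\<lambda>k. card (t ! (k - 1))) ` {1..m}"
proof -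
  have "set t = (\<lambda>k. t ! (k - 1)) ` {1..m}"
  proof
    show "set t \<subseteq> (\<lambda>k. t ! (k - 1)) ` {1..m}"
    proof
      fix s assume "s \<in> set t"
      then obtain i where "i < m" "s = t ! i" using assms by (auto simp: in_set_conv_nth)
      then show "s \<in> (\<lambda>k. t ! (k - 1)) ` {1..m}" by (intro image_eqI[of _ _ "Suc i"]) auto
    qed
    show "(\<lambda>k. t ! (k - 1)) ` {1..m} \<subseteq> set t" using assms by auto
  qed
  then show ?thesis by (simp add: image_image)
qed

lemma final_rep:
  assumes hR: "\<forall>x\<in>R. (\<forall>j\<ge>d 0. x j = 0) \<and> msig d W B m x = t" and ne: "x0 \<in> R"
    and kdef: "k = min (Min (insert (d 0) (card ` set t))) (d (Suc m))"
  shows "\<exists>W' b'. \<forall>x\<in>R. \<exists>y'. (\<forall>j\<ge>k. y' j = 0) \<and>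
     sigl (W (Suc m)) (B (Suc m)) (d m) (d (Suc m)) (netout d W B m x) = sigl W' b' k (d (Suc m)) y'"
proof -
  define n' where "n' = d (Suc m)"
  define P where "P x i = preact (W (Suc m)) (B (Suc m)) (d m) (netout d W B m x) i" for x i
  have lt: "length t = m" using hR ne msig_length by metis
  define \<mu> where "\<mu> = Min (insert (d 0) (card ` set t))"
  have "\<mu> \<in> insert (d 0) (card ` set t)" unfolding \<mu>_def by (rule Min_in) auto
  then have "\<mu> \<in> insert (d 0) ((\<lambda>k. card (t ! (k - 1))) ` {1..m})" using set_msig_card[OF lt] by simp
  have kmu: "k = min \<mu> n'" unfolding \<mu>_def n'_def by (rule kdef)
  then have "nrep d W B R m \<mu>" using \<open>\<mu> \<in> insert (d 0) ((\<lambda>k. card (t ! (k - 1))) ` {1..m})\<close> rep_induct[OF hR ne] by simp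
  then obtain I :: "nat set" and C e where IC: "finite I" "card I \<le> \<mu>"
      "\<forall>x\<in>R. \<exists>y. \<forall>j. netout d W B m x j = (\<Sum>p\<in>I. C j p * y p) + e j"
      unfolding nrep_def by blast
  have "\<exists>(I'::nat set) C' e'. finite I' \<and> card I' \<le> k \<and> (\<forall>x\<in>R. \<exists>y. \<forall>i<n'. P x i = (\<Sum>p\<in>I'. C' i p * y p) + e' i)"
  proof (cases "\<mu> \<le> n'")
    case True
    show ?thesis
    proof (rule exI[of _ I], rule exI[of _ "\<lambda>i p. \<Sum>q<d m. W (Suc m) i q * C q p"],
        rule exI[of _ "\<lambda>i. (\<Sum>q<d m. W (Suc m) i q * e q) + B (Suc m) i"], intro conjI ballI)
      show "finite I" by fact
      show "card I \<le> k" using IC(2) True kmu by simp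
      fix x assume x: "x \<in> R"
      obtain y where y: "\<forall>j. netout d W B m x j = (\<Sum>p\<in>I. C j p * y p) + e j" using IC(3) x by blast
      show "\<exists>y. \<forall>i<n'. P x i = (\<Sum>p\<in>I. (\<Sum>q<d m. W (Suc m) i q * C q p) * y p) + ((\<Sum>q<d m. W (Suc m) i q * e q) + B (Suc m) i)"
      proof (intro exI allI impI)
        fix i
        have "P x i = (\<Sum>q<d m. W (Suc m) i q * ((\<Sum>p\<in>I. C q p * y p) + e q)) + B (Suc m) i"
          unfolding P_def preact_def using y by simp
        also have "\<dots> = (\<Sum>p\<in>I. (\<Sum>q<d m. W (Suc m) i q * C q p) * y p) + ((\<Sum>q<d m. W (Suc m) i q * e q) + B (Suc m) i)"
          by (rule affine_comp)
        finally show "P x i = (\<Sum>p\<in>I. (\<Sum>q<d m. W (Suc m) i q * C q p) * y p) + ((\<Sum>q<d m. W (Suc m) i q * e q) + B (Suc m) i)" .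
      qed
    qed
  next
    case False
    show ?thesis
    proof (rule exI[of _ "{..<n'}"], rule exI[of _ "\<lambda>j p. if j = p then 1 else 0"], rule exI[of _ "\<lambda>j. 0"], intro conjI ballI)
      show "finite {..<n'}" by simp
      show "card {..<n'} \<le> k" using False kmu by simp
      fix x assume x: "x \<in> R"
      show "\<exists>y. \<forall>i<n'. P x i = (\<Sum>p\<in>{..<n'}. (if i = p then 1 else 0) * y p) + 0"
      proof (intro exI allI impI)
        fix i assume "i < n'"
        then show "P x i = (\<Sum>p\<in>{..<n'}. (if i = p then 1 else 0) * P x p) + 0"
          by (simp add: delta_sum)
      qed
    qed
  qed
  then obtain I' :: "nat set" and C' e' where IC': "finite I'" "card I' \<le> k"
     "\<forall>x\<in>R. \<exists>y. \<forall>i<n'. P x i = (\<Sum>p\<in>I'. C' i p * y p) + e' i" by blast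
  obtain W' b' where Wb: "\<forall>x\<in>R. \<exists>y'. (\<forall>j\<ge>k. y' j = 0) \<and> (\<forall>i<n'. P x i = preact W' b' k y' i)"
    using reparam[OF IC'] by blast
  show ?thesis
  proof (rule exI[of _ W'], rule exI[of _ b'], rule ballI)
    fix x assume x: "x \<in> R"
    obtain y' where y': "\<forall>j\<ge>k. y' j = 0" "\<forall>i<n'. P x i = preact W' b' k y' i" using Wb x by blast
    show "\<exists>y'. (\<forall>j\<ge>k. y' j = 0) \<and>
     sigl (W (Suc m)) (B (Suc m)) (d m) (d (Suc m)) (netout d W B m x) = sigl W' b' k (d (Suc m)) y'"
      using y' by (intro exI[of _ y'] conjI sigl_cong) (auto simp: P_def n'_def)
  qed
qed


lemma sigset_sub: "sigset n n' Wl bl \<subseteq> Pow {..<n'}"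
  by (auto simp: sigset_def sigl_def)

lemma sigset_finite: "finite (sigset n n' Wl bl)"
  by (rule finite_subset[OF sigset_sub]) simp

lemma card_le_of_sub: "s \<subseteq> {..<n'} \<Longrightarrow> card s \<le> n'"
  using card_mono[of "{..<n'}" s] by simp

lemma Hcount_props:
  assumes "S \<subseteq> Pow {..<n'}"
  shows "\<forall>j\<ge>Suc n'. Hcount n' S j = 0" "tail (Hcount n' S) J = card {s\<in>S. J \<le> card s}"
    "tail (Hcount n' S) J \<le> 2 ^ n'"
proof -
  have fin: "finite S" using assms by (rule finite_subset) simp
  have le: "\<forall>s\<in>S. card s \<le> n'" using assms card_le_of_sub by auto
  show "\<forall>j\<ge>Suc n'. Hcount n' S j = 0" using le fin by (auto simp: Hcount_def)
  show t: "tail (Hcount n' S) J = card {s\<in>S. J \<le> card s}"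
    unfolding Hcount_def by (rule tail_fiber[OF fin le])
  have "card {s\<in>S. J \<le> card s} \<le> card (Pow {..<n'::nat})"
    by (rule card_mono) (use assms in auto)
  then show "tail (Hcount n' S) J \<le> 2 ^ n'" using t by (simp add: card_Pow)
qed

lemma HRL_bound:
  assumes "1 \<le> k"
  shows "tail (Hcount n' (sigset k n' Wl bl)) J \<le> tail (maxV (HRL k n')) J"
proof -
  have F: "HRL k n' = {Hcount n' (sigset k n' Wl bl) | Wl bl. True}" using assms by (simp add: HRL_def)
  show ?thesis
    apply (rule maxV_ge[where N = "Suc n'" and K = "2 ^ n'"])
    using Hcount_props[OF sigset_sub] unfolding F by auto
qed

lemma tail_unit0: "tail (unitV 0) 0 = 1"
proof -
  have "\<forall>j\<ge>1. unitV 0 j = 0" by (simp add: unitV_def)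
  from tail_eq_sum[OF this] show ?thesis by (simp add: unitV_def)
qed

lemma HRL0_bound: "1 \<le> tail (maxV (HRL 0 n')) 0"
proof -
  have "tail (unitV 0) 0 \<le> tail (maxV {unitV 0}) 0"
  proof (rule maxV_ge[where N = 1 and K = 1])
    have z: "\<forall>j\<ge>1. unitV 0 j = 0" by (simp add: unitV_def)
    show "\<forall>w\<in>{unitV 0}. \<forall>j\<ge>1. w j = 0" using z by simp
    show "\<forall>w\<in>{unitV 0}. \<forall>j. tail w j \<le> 1"
    proof (intro ballI allI)
      fix w j assume "w \<in> {unitV 0}"
      then have w: "w = unitV 0" by simp
      have "tail (unitV 0) j = sum (unitV 0) {j..<1}" by (rule tail_eq_sum[OF z])
      then show "tail w j \<le> 1" using w by (cases j) (auto simp: unitV_def)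
    qed
  qed simp
  then show ?thesis by (simp add: HRL_def tail_unit0)
qed

lemma sigset0_card: "card (sigset 0 n' Wl bl) \<le> 1"
proof -
  have "sigset 0 n' Wl bl \<subseteq> {{i. i < n' \<and> bl i > 0}}"
    by (auto simp: sigset_def sigl_def preact_def)
  then show ?thesis by (metis card.empty card.insert card_mono empty_iff finite.intros(1) finite.intros(2) One_nat_def)
qed

lemma Sl_finite: "finite (Sl d W B k)"
proof -
  let ?D = "\<Sum>i\<le>k. d i"
  have "Sl d W B k \<subseteq> {xs. set xs \<subseteq> Pow {..<?D} \<and> length xs = k}"
  proof
    fix t assume "t \<in> Sl d W B k"
    then obtain x where t: "t = msig d W B k x" by (auto simp: Sl_def)
    have "set t \<subseteq> Pow {..<?D}"
    proof
      fix s assume "s \<in> set t"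
      then obtain i where i: "i \<in> {1..<Suc k}" "s = sigl (W i) (B i) (d (i - 1)) (d i) (netout d W B (i - 1) x)"
        unfolding t msig_def set_map set_upt by blast
      have "d i \<le> ?D" by (rule member_le_sum) (use i in auto)
      then show "s \<in> Pow {..<?D}" using sigl_sub i(2) by fastforce
    qed
    then show "t \<in> {xs. set xs \<subseteq> Pow {..<?D} \<and> length xs = k}" using t msig_length by auto
  qed
  then show ?thesis by (rule finite_subset) (rule finite_lists_length_eq, simp)
qed

lemma g_snoc:
  "Min (insert n0 (card ` set (t @ [s]))) = min (card s) (Min (insert n0 (card ` set t)))"
proof -
  have "insert n0 (card ` set (t @ [s])) = insert (card s) (insert n0 (card ` set t))" by auto
  then show ?thesis by (simp add: Min_insert)
qed


theorem mainTheorem4: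
  fixes d :: "nat \<Rightarrow> nat" and L :: nat
    and W :: "nat \<Rightarrow> nat \<Rightarrow> nat \<Rightarrow> real" and B :: "nat \<Rightarrow> nat \<Rightarrow> real"
    and \<gamma> :: "nat \<Rightarrow> nat \<Rightarrow> nat \<Rightarrow> nat" and l :: nat
  assumes "0 < L" and "\<forall>k\<le>L. 0 < d k"
    and "Gamma \<gamma>"
    and "2 \<le> l" and "l \<le> L"
  shows "precV (Htil (d 0) (Sl d W B l)) (phi \<gamma> (d l) (Htil (d 0) (Sl d W B (l - 1))))"
proof -
  define m where "m = l - 1"
  have lm: "l = Suc m" using assms(4) by (simp add: m_def)
  define g where "g t = Min (insert (d 0) (card ` set t))" for t :: "nat set list"
  define U1 where "U1 = Sl d W B m"
  define U2 where "U2 = Sl d W B l"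
  have fU1: "finite U1" and fU2: "finite U2" by (simp_all add: U1_def U2_def Sl_finite)
  have n'pos: "1 \<le> d l" using assms(2,5) by (simp add: Suc_le_eq)
  have G1: "\<forall>n\<le>d l. finsupp (\<gamma> n (d l)) \<and> precV (maxV (HRL n (d l))) (\<gamma> n (d l))"
    using assms(3) n'pos by (simp add: Gamma_def)
  have gsupp: "\<forall>i\<le>d l. \<exists>N. \<forall>j\<ge>N. \<gamma> i (d l) j = 0" using G1 finsupp_bound by blast
  have gle: "g t \<le> d 0" for t unfolding g_def by (rule Min_le) auto
  have Ht: "Htil (d 0) U = (\<lambda>j. card {t\<in>U. g t = j})" for U by (simp add: Htil_def g_def)
  have msigl: "msig d W B l x = msig d W B m x @ [sigl (W l) (B l) (d m) (d l) (netout d W B m x)]" for x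
    using msig_Suc[of d W B m x] lm by simp
  show ?thesis unfolding precV_def
  proof
    fix J
    have lhs: "tail (Htil (d 0) (Sl d W B l)) J = card {t\<in>U2. J \<le> g t}"
      unfolding Ht U2_def by (rule tail_fiber[OF Sl_finite]) (use gle in blast)
    have rhs: "tail (phi \<gamma> (d l) (Htil (d 0) (Sl d W B (l - 1)))) J
       = (\<Sum>t\<in>U1. if J \<le> min (g t) (d l) then tail (\<gamma> (min (g t) (d l)) (d l)) J else 0)"
      unfolding Ht U1_def m_def by (rule tail_phi[where \<gamma>=\<gamma> and n'="d l", OF Sl_finite gsupp])
    have split: "card {t\<in>U2. J \<le> g t} \<le> (\<Sum>t\<in>U1. card {t'\<in>U2. J \<le> g t' \<and> butlast t' = t})"
    proof -
      have "{t\<in>U2. J \<le> g t} \<subseteq> (\<Union>t\<in>U1. {t'\<in>U2. J \<le> g t' \<and> butlast t' = t})"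
      proof
        fix t' assume t': "t' \<in> {t\<in>U2. J \<le> g t}"
        then obtain x where x: "\<forall>j\<ge>d 0. x j = 0" "t' = msig d W B l x" by (auto simp: U2_def Sl_def)
        then have "butlast t' \<in> U1" using msigl by (auto simp: U1_def Sl_def)
        then show "t' \<in> (\<Union>t\<in>U1. {t'\<in>U2. J \<le> g t' \<and> butlast t' = t})" using t' by blast
      qed
      then have "card {t\<in>U2. J \<le> g t} \<le> card (\<Union>t\<in>U1. {t'\<in>U2. J \<le> g t' \<and> butlast t' = t})"
        by (rule card_mono[rotated]) (use fU1 fU2 in auto)
      also have "\<dots> \<le> (\<Sum>t\<in>U1. card {t'\<in>U2. J \<le> g t' \<and> butlast t' = t})"
        by (rule card_UN_le[OF fU1])
      finally show ?thesis .
    qed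
    have termb: "card {t'\<in>U2. J \<le> g t' \<and> butlast t' = t}
        \<le> (if J \<le> min (g t) (d l) then tail (\<gamma> (min (g t) (d l)) (d l)) J else 0)" if tU: "t \<in> U1" for t
    proof -
      obtain x0 where x0: "\<forall>j\<ge>d 0. x0 j = 0" "msig d W B m x0 = t" using tU by (auto simp: U1_def Sl_def)
      define R where "R = {x. (\<forall>j\<ge>d 0. x j = 0) \<and> msig d W B m x = t}"
      have hR: "\<forall>x\<in>R. (\<forall>j\<ge>d 0. x j = 0) \<and> msig d W B m x = t" by (simp add: R_def)
      have x0R: "x0 \<in> R" using x0 by (simp add: R_def)
      define k where "k = min (g t) (d l)"
      define Ext where "Ext = {t'\<in>U2. J \<le> g t' \<and> butlast t' = t}"
      have fExt: "finite Ext" using fU2 by (simp add: Ext_def)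
      have ext_char: "\<exists>x\<in>R. t' = t @ [sigl (W l) (B l) (d m) (d l) (netout d W B m x)]" if tE: "t' \<in> Ext" for t'
      proof -
        obtain x where x: "\<forall>j\<ge>d 0. x j = 0" "t' = msig d W B l x" using tE by (auto simp: Ext_def U2_def Sl_def)
        have "butlast t' = t" using that by (simp add: Ext_def)
        then have "msig d W B m x = t" using x(2) msigl by simp
        then show ?thesis using x msigl by (auto simp: R_def)
      qed
      have ext_J: "J \<le> k \<and> J \<le> card (last t')" if tE: "t' \<in> Ext" for t'
      proof -
        obtain x where x: "x \<in> R" "t' = t @ [sigl (W l) (B l) (d m) (d l) (netout d W B m x)]"
          using ext_char[OF tE] by blast
        define s where "s = sigl (W l) (B l) (d m) (d l) (netout d W B m x)"
        have cs: "card s \<le> d l" unfolding s_def by (rule card_le_of_sub[OF sigl_sub])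
        have "J \<le> g t'" using that by (simp add: Ext_def)
        also have "g t' = min (card s) (g t)" unfolding g_def x(2) s_def by (rule g_snoc)
        finally show ?thesis using cs x(2) by (auto simp: k_def s_def)
      qed
      show ?thesis
      proof (cases "J \<le> k")
        case False
        then have "Ext = {}" using ext_J by blast
        then show ?thesis using False unfolding Ext_def[symmetric] k_def[symmetric] by simp
      next
        case True
        have kdef: "k = min (Min (insert (d 0) (card ` set t))) (d (Suc m))"
          by (simp add: k_def g_def lm)
        obtain W' b' where Wb: "\<forall>x\<in>R. \<exists>y'. (\<forall>j\<ge>k. y' j = 0) \<and>
           sigl (W (Suc m)) (B (Suc m)) (d m) (d (Suc m)) (netout d W B m x) = sigl W' b' k (d (Suc m)) y'"
          using final_rep[OF hR x0R kdef] by blast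
        define S where "S = {s\<in>sigset k (d l) W' b'. J \<le> card s}"
        have sub: "last ` Ext \<subseteq> S"
        proof
          fix s assume "s \<in> last ` Ext"
          then obtain t' where t': "t' \<in> Ext" "s = last t'" by blast
          obtain x where x: "x \<in> R" "t' = t @ [sigl (W l) (B l) (d m) (d l) (netout d W B m x)]"
            using ext_char[OF t'(1)] by blast
          obtain y' where y': "\<forall>j\<ge>k. y' j = 0"
            "sigl (W (Suc m)) (B (Suc m)) (d m) (d (Suc m)) (netout d W B m x) = sigl W' b' k (d (Suc m)) y'"
            using Wb x(1) by blast
          have "s = sigl W' b' k (d l) y'" using t'(2) x(2) y'(2) lm by simp
          then have "s \<in> sigset k (d l) W' b'" using y'(1) by (auto simp: sigset_def)
          then show "s \<in> S" using ext_J[OF t'(1)] t'(2) by (simp add: S_def)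
        qed
        have inj: "inj_on last Ext"
        proof
          fix t1 t2 assume t12: "t1 \<in> Ext" "t2 \<in> Ext" "last t1 = last t2"
          have "t1 \<noteq> []" "t2 \<noteq> []" using ext_char t12(1,2) by fastforce+
          moreover have "butlast t1 = butlast t2" using t12(1,2) by (simp add: Ext_def)
          ultimately show "t1 = t2" using t12(3) by (metis append_butlast_last_id)
        qed
        have fS: "finite S" unfolding S_def using sigset_finite by simp
        have cE: "card Ext \<le> card S"
          using card_image[OF inj] card_mono[OF fS sub] by simp
        have kle: "k \<le> d l" by (simp add: k_def)
        have "card S \<le> tail (\<gamma> k (d l)) J"
        proof (cases "1 \<le> k")
          case True
          have "card S = tail (Hcount (d l) (sigset k (d l) W' b')) J"
            unfolding S_def using Hcount_props(2)[OF sigset_sub] by simp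
          also have "\<dots> \<le> tail (maxV (HRL k (d l))) J" by (rule HRL_bound[OF True])
          also have "\<dots> \<le> tail (\<gamma> k (d l)) J" using G1 kle by (simp add: precV_def)
          finally show ?thesis .
        next
          case False
          then have k0: "k = 0" by simp
          then have J0: "J = 0" using \<open>J \<le> k\<close> by simp
          have "card S \<le> card (sigset 0 (d l) W' b')"
            unfolding S_def k0 by (rule card_mono[OF sigset_finite]) auto
          also have "\<dots> \<le> 1" by (rule sigset0_card)
          also have "\<dots> \<le> tail (maxV (HRL 0 (d l))) 0" by (rule HRL0_bound)
          also have "\<dots> \<le> tail (\<gamma> 0 (d l)) 0" using G1 by (simp add: precV_def)
          finally show ?thesis using k0 J0 by simp
        qed
        then show ?thesis using cE True by (simp add: Ext_def k_def)
      qed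
    qed
    have "card {t\<in>U2. J \<le> g t} \<le> (\<Sum>t\<in>U1. if J \<le> min (g t) (d l) then tail (\<gamma> (min (g t) (d l)) (d l)) J else 0)"
      using split sum_mono[of U1, OF termb] by (rule order_trans)
    then show "tail (Htil (d 0) (Sl d W B l)) J \<le> tail (phi \<gamma> (d l) (Htil (d 0) (Sl d W B (l - 1)))) J"
      using lhs rhs by simp
  qed
qed

end
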